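(* Let $X$ be an algebraic K3 surface of Picard number $9$ carrying an even set of eight disjoint smooth rational curves $N_1,\dots,N_8$, and let $N\subseteq NS(X)$ be the minimal primitive sublattice containing $N_1,\dots,N_8$ (it is generated by the $N_i$ and $\hat N=\frac12(N_1+\dots+N_8)$). Let $L$ be a generator of the orthogonal complement $N^{\perp}\subseteq NS(X)$ with $L^2>0$, let $d$ be the positive integer with $L^2=2d$, and put $\mathcal{L}_{2d}=\mathbb{Z}L\oplus N$. Then: (1) if $L^2\equiv 2 \pmod 4$, then $NS(X)=\mathcal{L}_{2d}$; (2) if $L^2\equiv 0\pmod 4$, then either $NS(X)=\mathcal{L}_{2d}$, or $NS(X)=\mathcal{L}'_{2d}$, where $\mathcal{L}'_{2d}$ is the lattice generated by $\mathcal{L}_{2d}$ and a class $\frac{L+v}{2}$ with $v\in N$ satisfying: $v^2\in 4\mathbb{Z}$; $v\cdot N_i\in 2\mathbb{Z}$ for all $i$, and $v/2\notin N$; and $L^2\equiv -v^2 \pmod 8$.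
   Context: All varieties are over $\mathbb{C}$. A set of disjoint smooth rational curves $N_1,\dots,N_m$ on a smooth surface $X$ is an even set if there exists $\delta\in \mathrm{Pic}(X)$ with $N_1+\dots+N_m\sim 2\delta$ (linear equivalence). The Nikulin lattice is the even negative definite lattice $N$ of rank $8$ generated by classes $N_1,\dots,N_8$ and $\hat N=\frac12\sum_{i=1}^8 N_i$, with bilinear form determined by $N_i\cdot N_j=-2\delta_{ij}$; for an even set of eight disjoint smooth rational curves on a K3 surface, the minimal primitive sublattice of $NS(X)$ containing them is isometric to this lattice. $NS(X)$ denotes the Néron–Severi lattice with its intersection form. *)

theory Defs
  imports "HOL-Analysis.Analysis" "HOL-Library.Numeral_Type"
begin

text \<open>Lattice-theoretic model: NS(X) is identified with int^9 (a free abelian group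
  of rank 9 = Picard number), the intersection form given by an integer Gram matrix G.\<close>

definition bform :: "int^'n^'n \<Rightarrow> int^'n \<Rightarrow> int^'n \<Rightarrow> int" where
  "bform G x y = (\<Sum>i\<in>UNIV. \<Sum>j\<in>UNIV. x$i * G$i$j * y$j)"

definition even_lattice_form :: "int^'n^'n \<Rightarrow> bool" where
  "even_lattice_form G \<longleftrightarrow> (\<forall>i j. G$i$j = G$j$i) \<and> (\<forall>i. even (G$i$i)) \<and> det G \<noteq> 0"

definition zspan :: "(('a::comm_ring_1)^'n) set \<Rightarrow> ('a^'n) set" where
  "zspan S = {x. \<exists>F c. finite F \<and> F \<subseteq> S \<and> x = (\<Sum>s\<in>F. c s *s s)}"

text \<open>Minimal primitive sublattice containing S (saturation of its span).\<close>
definition primitive_closure :: "(int^'n) set \<Rightarrow> (int^'n) set" where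
  "primitive_closure S = {x. \<exists>k::int. k \<noteq> 0 \<and> k *s x \<in> zspan S}"

definition orth_compl :: "int^'n^'n \<Rightarrow> (int^'n) set \<Rightarrow> (int^'n) set" where
  "orth_compl G A = {x. \<forall>y\<in>A. bform G x y = 0}"

end

theory Submission
  imports Defs
begin

interpretation zmod: module "vector_scalar_mult :: int \<Rightarrow> int^'n \<Rightarrow> int^'n"
  by unfold_locales (simp_all add: vector_add_ldistrib vector_sadd_rdistrib vector_smult_assoc)

lemma zspan_eq: "zspan S = zmod.span S"
  unfolding zspan_def zmod.span_explicit by blast

lemma bform_add_left: "bform G (x + y) z = bform G x z + bform G y z"
  unfolding bform_def by (simp add: algebra_simps sum.distrib)

lemma bform_add_right: "bform G z (x + y) = bform G z x + bform G z y"
  unfolding bform_def by (simp add: algebra_simps sum.distrib)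

lemma bform_scale_left: "bform G (c *s x) z = c * bform G x z"
  unfolding bform_def by (simp add: algebra_simps sum_distrib_left)

lemma bform_scale_right: "bform G z (c *s x) = c * bform G z x"
  unfolding bform_def by (simp add: algebra_simps sum_distrib_left)

lemma bform_zero_left: "bform G 0 z = 0"
  unfolding bform_def by simp

lemma bform_zero_right: "bform G z 0 = 0"
  unfolding bform_def by simp

lemma bform_neg_left: "bform G (- x) z = - bform G x z"
  using bform_scale_left[of G "-1" x z] by (simp add: vector_sneg_minus1[symmetric])

lemma bform_neg_right: "bform G z (- x) = - bform G z x"
  using bform_scale_right[of G z "-1" x] by (simp add: vector_sneg_minus1[symmetric])

lemma bform_diff_left: "bform G (x - y) z = bform G x z - bform G y z"
  using bform_add_left[of G x "-y" z] bform_neg_left[of G y z] by simp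

lemma bform_sum_left: "finite A \<Longrightarrow> bform G (\<Sum>i\<in>A. f i) z = (\<Sum>i\<in>A. bform G (f i) z)"
  by (induction A rule: finite_induct) (simp_all add: bform_zero_left bform_add_left)

lemma bform_sum_right: "finite A \<Longrightarrow> bform G z (\<Sum>i\<in>A. f i) = (\<Sum>i\<in>A. bform G z (f i))"
  by (induction A rule: finite_induct) (simp_all add: bform_zero_right bform_add_right)

lemma bform_sym: "(\<forall>i j. G$i$j = G$j$i) \<Longrightarrow> bform G x y = bform G y x"
  unfolding bform_def
  by (subst sum.swap) (simp add: mult_ac)

lemma even_double_sum:
  fixes f :: "'a \<Rightarrow> 'a \<Rightarrow> int"
  assumes "finite A" and sym: "\<And>i j. f i j = f j i" and diag: "\<And>i. even (f i i)"
  shows "even (\<Sum>i\<in>A. \<Sum>j\<in>A. f i j)"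
  using assms(1)
proof (induction A rule: finite_induct)
  case empty then show ?case by simp
next
  case (insert a A)
  have h1: "(\<Sum>i\<in>A. f i a) = (\<Sum>j\<in>A. f a j)"
    by (intro sum.cong refl) (rule sym)
  have "(\<Sum>i\<in>insert a A. \<Sum>j\<in>insert a A. f i j)
      = f a a + 2 * (\<Sum>j\<in>A. f a j) + (\<Sum>i\<in>A. \<Sum>j\<in>A. f i j)"
    using insert h1 by (simp add: sum.distrib)
  then show ?case using insert diag by simp
qed

lemma bform_even:
  assumes "even_lattice_form G" shows "even (bform G x x)"
  unfolding bform_def
  by (rule even_double_sum) (use assms in \<open>auto simp: even_lattice_form_def mult_ac\<close>)


theorem proposition3p2:
  fixes G :: "int^9^9" and n :: "8 \<Rightarrow> int^9" and L :: "int^9" and d :: int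
  assumes lattice: "even_lattice_form G"
    and curves: "\<And>i j. bform G (n i) (n j) = (if i = j then -2 else 0)"
    and even_set: "\<exists>\<delta>. (\<Sum>i\<in>UNIV. n i) = 2 *s \<delta>"
    and nikulin: "primitive_closure (range n)
                    = zspan (insert (SOME \<delta>. (\<Sum>i\<in>UNIV. n i) = 2 *s \<delta>) (range n))"
    and L_gen: "orth_compl G (primitive_closure (range n)) = {k *s L | k. True}"
    and L_pos: "bform G L L > 0"
    and d_def: "bform G L L = 2 * d"
  shows "(bform G L L mod 4 = 2 \<longrightarrow>
            UNIV = zspan (insert L (primitive_closure (range n))))
       \<and> (bform G L L mod 4 = 0 \<longrightarrow>
            (UNIV = zspan (insert L (primitive_closure (range n)))
             \<or> (\<exists>v\<in>primitive_closure (range n). \<exists>w.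
                  2 *s w = L + v
                \<and> 4 dvd bform G v v
                \<and> (\<forall>i. even (bform G v (n i)))
                \<and> \<not> (\<exists>u\<in>primitive_closure (range n). 2 *s u = v)
                \<and> (bform G L L + bform G v v) mod 8 = 0
                \<and> UNIV = zspan (insert w (insert L (primitive_closure (range n)))))))"
proof -
  define P where "P = primitive_closure (range n)"
  define Zn where "Zn = zmod.span (range n)"
  define s where "s x = (\<Sum>i\<in>UNIV. bform G x (n i) *s n i)" for x
  have symG: "\<forall>i j. G$i$j = G$j$i" using lattice by (simp add: even_lattice_form_def)
  have ZnP: "y \<in> P" if "y \<in> Zn" for y
    using that unfolding P_def Zn_def primitive_closure_def zspan_eq
    by (intro CollectI exI[of _ 1]) simp
  have ZnP2: "y \<in> P" if "2 *s y \<in> Zn" for y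
    using that unfolding P_def Zn_def primitive_closure_def zspan_eq
    by (intro CollectI exI[of _ 2]) simp
  have sZn: "s x \<in> Zn" for x
    unfolding s_def Zn_def
    by (intro zmod.span_sum zmod.span_scale zmod.span_base) auto
  have nsZn: "- s x \<in> Zn" for x
    using sZn[of x] unfolding Zn_def by (rule zmod.span_neg)
  have dsZn: "s x - s y \<in> Zn" for x y
    using sZn[of x] sZn[of y] unfolding Zn_def by (rule zmod.span_diff)
  have orthZn: "bform G z u = 0" if "\<forall>i. bform G z (n i) = 0" "u \<in> Zn" for z u
  proof -
    from that(2) obtain t r where "finite t" "t \<subseteq> range n" "u = (\<Sum>a\<in>t. r a *s a)"
      unfolding Zn_def zmod.span_explicit by blast
    then show ?thesis using that(1)
      by (auto simp: bform_sum_right bform_scale_right intro!: sum.neutral)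
  qed
  have orthP: "bform G z y = 0" if "\<forall>i. bform G z (n i) = 0" "y \<in> P" for z y
  proof -
    from that(2) obtain k where k: "k \<noteq> 0" "k *s y \<in> Zn"
      unfolding P_def primitive_closure_def Zn_def zspan_eq by blast
    have "bform G z (k *s y) = 0" using orthZn[OF that(1) k(2)] .
    then show ?thesis using k(1) by (simp add: bform_scale_right)
  qed
  have orthL: "\<exists>k. z = k *s L" if "\<forall>y\<in>P. bform G z y = 0" for z
  proof -
    have "z \<in> orth_compl G P" using that by (simp add: orth_compl_def)
    then show ?thesis using L_gen unfolding P_def by blast
  qed
  have LP: "bform G L y = 0" if "y \<in> P" for y
  proof -
    have "L \<in> orth_compl G P" using L_gen unfolding P_def by (auto intro: exI[of _ 1])
    then show ?thesis using that by (simp add: orth_compl_def)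
  qed
  have sn: "bform G (s x) (n j) = -2 * bform G x (n j)" for x j
  proof -
    have "bform G (s x) (n j) = (\<Sum>i\<in>UNIV. bform G x (n i) * (if i = j then -2 else 0))"
      unfolding s_def by (simp add: bform_sum_left bform_scale_left curves)
    also have "\<dots> = (\<Sum>i\<in>UNIV. if i = j then -2 * bform G x (n j) else 0)"
      by (intro sum.cong) auto
    also have "\<dots> = -2 * bform G x (n j)" by simp
    finally show ?thesis .
  qed
  have ns: "bform G (n j) (s x) = -2 * bform G x (n j)" for x j
    using sn bform_sym[OF symG] by metis
  have decomp: "\<exists>k. 2 *s x + s x = k *s L" for x
  proof -
    have "\<forall>i. bform G (2 *s x + s x) (n i) = 0"
      by (simp add: bform_add_left bform_scale_left sn)
    then show ?thesis using orthP orthL by blast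
  qed
  have inLP: "z \<in> zspan (insert L P)" if "2 *s z = (2*m) *s L + u" "u \<in> Zn" for z m u
  proof -
    have "2 *s (z - m *s L) = u"
      using that(1) by (simp add: vector_ssub_ldistrib vector_smult_assoc)
    then have "z - m *s L \<in> P" using ZnP2 that(2) by simp
    then have "m *s L + (z - m *s L) \<in> zmod.span (insert L P)"
      by (intro zmod.span_add zmod.span_scale zmod.span_base) auto
    then show ?thesis by (simp add: zspan_eq)
  qed
  have evens: "even (\<Sum>i\<in>UNIV. bform G x (n i))" for x
  proof -
    obtain \<delta> where "(\<Sum>i\<in>UNIV. n i) = 2 *s \<delta>" using even_set by blast
    then have "bform G x (\<Sum>i\<in>UNIV. n i) = 2 * bform G x \<delta>"
      by (simp add: bform_scale_right)
    then show ?thesis by (simp add: bform_sum_right)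
  qed
  have vv: "4 dvd bform G (- s x) (- s x)" for x
  proof -
    have "bform G (- s x) (- s x) = (\<Sum>i\<in>UNIV. bform G x (n i) * bform G (n i) (s x))"
      by (simp add: bform_neg_left bform_neg_right s_def bform_sum_left bform_scale_left)
    also have "\<dots> = -2 * (\<Sum>i\<in>UNIV. bform G x (n i) ^ 2)"
      by (simp add: ns sum_distrib_left power2_eq_square mult_ac)
    finally have eq: "bform G (- s x) (- s x) = -2 * (\<Sum>i\<in>UNIV. bform G x (n i) ^ 2)" .
    have "(\<Sum>i\<in>UNIV. bform G x (n i) ^ 2) = (\<Sum>i\<in>UNIV. bform G x (n i))
        + (\<Sum>i\<in>UNIV. bform G x (n i) ^ 2 - bform G x (n i))"
      by (simp add: sum_subtractf)
    moreover have "even (\<Sum>i\<in>UNIV. bform G x (n i) ^ 2 - bform G x (n i))"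
      by (intro dvd_sum) (simp add: power2_eq_square)
    ultimately have "even (\<Sum>i\<in>UNIV. bform G x (n i) ^ 2)" using evens[of x] by simp
    then show ?thesis using eq by auto
  qed
  have even_case: "UNIV = zspan (insert L P)" if H: "\<forall>x. \<exists>k. even k \<and> 2 *s x + s x = k *s L"
  proof -
    have "x \<in> zspan (insert L P)" for x
    proof -
      obtain k where k: "even k" "2 *s x + s x = k *s L" using H by blast
      then obtain m where m: "k = 2 * m" by (auto elim: evenE)
      have "\<forall>i. 2 * x$i + s x $ i = k * L$i" using k(2) by (simp add: vec_eq_iff)
      then have "2 *s x = (2*m) *s L + (- s x)" using m
        by (auto simp: vec_eq_iff algebra_simps)
      then show ?thesis using inLP nsZn by blast
    qed
    then show ?thesis by blast
  qed
  have odd_case: "\<exists>v\<in>P. \<exists>w.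
                  2 *s w = L + v
                \<and> 4 dvd bform G v v
                \<and> (\<forall>i. even (bform G v (n i)))
                \<and> \<not> (\<exists>u\<in>P. 2 *s u = v)
                \<and> (bform G L L + bform G v v) mod 8 = 0
                \<and> UNIV = zspan (insert w (insert L P))"
    if H: "2 *s x0 + s x0 = k0 *s L" "odd k0" for x0 k0
  proof -
    obtain m0 where m0: "k0 = 2 * m0 + 1" using H(2) by (auto elim: oddE)
    define w where "w = x0 - m0 *s L"
    define v where "v = - s x0"
    have wv: "2 *s w = L + v"
    proof -
      have "\<forall>i. 2 * x0$i + s x0 $ i = k0 * L$i" using H(1) by (simp add: vec_eq_iff)
      then show ?thesis unfolding w_def v_def using m0 by (auto simp: vec_eq_iff algebra_simps)
    qed
    have vZn: "v \<in> Zn" unfolding v_def by (rule nsZn)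
    have vP: "v \<in> P" using ZnP[OF vZn] .
    have v4: "4 dvd bform G v v" unfolding v_def by (rule vv)
    have vn: "even (bform G v (n i))" for i
      unfolding v_def by (simp add: bform_neg_left sn)
    have nou: "\<not> (\<exists>u\<in>P. 2 *s u = v)"
    proof
      assume "\<exists>u\<in>P. 2 *s u = v"
      then obtain u where u: "u \<in> P" "2 *s u = v" by blast
      have L2: "L = 2 *s (w - u)" using wv u(2) by (simp add: vector_ssub_ldistrib)
      have "bform G (w - u) y = 0" if "y \<in> P" for y
      proof -
        have "2 * bform G (w - u) y = 0" using LP[OF that] L2 by (metis bform_scale_left)
        then show ?thesis by simp
      qed
      then obtain j where j: "w - u = j *s L" using orthL by blast
      have "(1 - 2 * j) *s L = 0" using L2 j
        by (metis (no_types, lifting) vector_smult_assoc vector_sub_rdistrib vector_smult_lid right_minus_eq)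
      moreover have "1 - 2 * j \<noteq> 0" by presburger
      ultimately have "L = 0" using vector_mul_eq_0 by blast
      then show False using L_pos by (simp add: bform_zero_left)
    qed
    have m8: "(bform G L L + bform G v v) mod 8 = 0"
    proof -
      have "bform G (2 *s w) (2 *s w) = 4 * bform G w w" by (simp add: bform_scale_left bform_scale_right)
      moreover have "bform G (L + v) (L + v) = bform G L L + bform G v v"
        using LP[OF vP] bform_sym[OF symG, of v L]
        by (simp add: bform_add_left bform_add_right)
      moreover have "even (bform G w w)" by (rule bform_even[OF lattice])
      ultimately have "bform G L L + bform G v v = 4 * bform G w w" "even (bform G w w)"
        using wv by metis+
      then show ?thesis by (auto elim!: evenE)
    qed
    have "y \<in> zspan (insert w (insert L P))" for y
    proof -
      obtain k where k: "2 *s y + s y = k *s L" using decomp by blast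
      have mono: "zspan (insert L P) \<subseteq> zspan (insert w (insert L P))"
        unfolding zspan_eq by (rule zmod.span_mono) blast
      show ?thesis
      proof (cases "even k")
        case True
        then obtain m where m: "k = 2 * m" by (auto elim: evenE)
        have "\<forall>i. 2 * y$i + s y $ i = k * L$i" using k by (simp add: vec_eq_iff)
        then have "2 *s y = (2*m) *s L + (- s y)" using m
          by (auto simp: vec_eq_iff algebra_simps)
        then have "y \<in> zspan (insert L P)" using inLP nsZn by blast
        then show ?thesis using mono by blast
      next
        case False
        then obtain m where m: "k = 2 * m + 1" by (auto elim: oddE)
        have "\<forall>i. 2 * y$i + s y $ i = k * L$i" using k by (simp add: vec_eq_iff)
        moreover have "\<forall>i. 2 * w$i = L$i - s x0 $ i" using wv by (simp add: vec_eq_iff v_def)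
        ultimately have "2 *s (y - w) = (2*m) *s L + (s x0 - s y)"
          using m by (auto simp: vec_eq_iff algebra_simps)
        moreover have "s x0 - s y \<in> Zn" by (rule dsZn)
        ultimately have "y - w \<in> zspan (insert L P)" using inLP by blast
        then have "y - w \<in> zmod.span (insert w (insert L P))" using mono zspan_eq by blast
        moreover have "w \<in> zmod.span (insert w (insert L P))" by (rule zmod.span_base) simp
        ultimately have "w + (y - w) \<in> zmod.span (insert w (insert L P))" by (rule zmod.span_add[rotated])
        then show ?thesis by (simp add: zspan_eq)
      qed
    qed
    then have U: "UNIV = zspan (insert w (insert L P))" by blast
    show ?thesis by (intro bexI[of _ v] exI[of _ w] conjI allI wv v4 vn nou m8 U vP)
  qed
  show ?thesis
  proof (cases "\<forall>x. \<exists>k. even k \<and> 2 *s x + s x = k *s L")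
    case True
    then have E: "UNIV = zspan (insert L P)" by (rule even_case)
    show ?thesis unfolding P_def[symmetric] by (intro conjI impI disjI1 E)
  next
    case False
    then obtain x0 where x0: "\<not> (\<exists>k. even k \<and> 2 *s x0 + s x0 = k *s L)" by blast
    obtain k0 where k0: "2 *s x0 + s x0 = k0 *s L" using decomp by blast
    with x0 have "odd k0" by blast
    have OC: "\<exists>v\<in>P. \<exists>w.
                  2 *s w = L + v
                \<and> 4 dvd bform G v v
                \<and> (\<forall>i. even (bform G v (n i)))
                \<and> \<not> (\<exists>u\<in>P. 2 *s u = v)
                \<and> (bform G L L + bform G v v) mod 8 = 0
                \<and> UNIV = zspan (insert w (insert L P))" by (rule odd_case[OF k0 \<open>odd k0\<close>])
    from OC obtain v where v4: "4 dvd bform G v v" and v8: "(bform G L L + bform G v v) mod 8 = 0"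
      by (elim bexE exE conjE) (rule that; assumption)
    have "bform G L L mod 4 \<noteq> 2"
    proof
      assume a: "bform G L L mod 4 = 2"
      from v4 v8 have "4 dvd bform G L L" by presburger
      with a show False by simp
    qed
    note ne = this
    show ?thesis unfolding P_def[symmetric]
    proof (intro conjI impI)
      assume "bform G L L mod 4 = 2"
      with ne show "UNIV = zspan (insert L P)" by (rule notE)
    next
      show "UNIV = zspan (insert L P) \<or> (\<exists>v\<in>P. \<exists>w.
                  2 *s w = L + v
                \<and> 4 dvd bform G v v
                \<and> (\<forall>i. even (bform G v (n i)))
                \<and> \<not> (\<exists>u\<in>P. 2 *s u = v)
                \<and> (bform G L L + bform G v v) mod 8 = 0
                \<and> UNIV = zspan (insert w (insert L P)))"
        using OC by (rule disjI2)
    qed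
  qed
qed
end
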